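(* In the complex single-interference setting of the context (with $N\ge2$, $\|h_0\|=\|h_1\|=1$, $h_0^{\sf H}h_1=\sin\tau\,e^{i\phi_z}$, $\tau\in[0,\pi/2)$, $\phi_z\in[0,2\pi)$, $\sigma_0^2,\sigma_1^2,\sigma_n^2>0$, $c_1=|c_1|e^{i\phi_c}$, $|c_1|\le\sigma_0\sigma_1$), let $\delta_1:=\sigma_n^2\tan\tau-|c_1|\cos\tau\cos(\phi_c+\phi_z)$ and $\delta_2:=\sigma_n^2\tan\tau-|c_1|\cos\tau\,e^{i(\phi_c+\phi_z)}$. Then \[ \mathrm{MSE}_{\rm MVDR}=\frac{\sigma_n^2(\sigma_1^2+\sigma_n^2)+|c_1|^2\cos^2\tau}{\sigma_1^2\cos^2\tau+\sigma_n^2},\quad \mathrm{MSE}_{\rm ZF}=\sigma_n^2(\tan^2\tau+1),\quad \mathrm{MSE}_{\rm MMSE\text{-}DR}=\frac{\sigma_n^2(\sigma_1^2+\sigma_n^2)}{\sigma_1^2\cos^2\tau+\sigma_n^2}. \] If $\delta_2=0$, then $\mathrm{MSE}(\lambda)=\mathrm{MSE}_{\rm ZF}=\mathrm{MSE}_{\rm MVDR}$ for all $\lambda\ge0$. If $\delta_2\neq0$, then with $\gamma:=\delta_1\sigma_n^2\tan\tau/|\delta_2|^2$, \[ \mathrm{MSE}_{\rm RZF}=\begin{cases}\mathrm{MSE}_{\rm ZF}, & \gamma\le0,\\[1mm] \mathrm{MSE}_{\rm MMSE\text{-}DR}+\Big(1-\Big|\dfrac{\delta_1}{\delta_2}\Big|^2\Big)\dfrac{\sigma_n^4\tan^2\tau}{\sigma_1^2\cos^2\tau+\sigma_n^2},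 & \gamma\in(0,1),\\[2mm] \mathrm{MSE}_{\rm MVDR}, & \gamma\ge1.\end{cases} \]
   Context: Complex single-interference model: $y(k)=s_0(k)h_0+s_1(k)h_1+n(k)\in\mathbb{C}^N$, with zero-mean jointly weakly stationary complex signals $s_0,s_1$, $\sigma_j^2:=E|s_j(k)|^2$, $c_1:=E[s_0^*(k)s_1(k)]$, and noise $n(k)\sim\mathcal{CN}(0,\sigma_n^2I)$ uncorrelated with the signals. $R:=E[y(k)y(k)^{\sf H}]$. The MSE of $w$ is $J_{\rm MSE}(w):=E|w^{\sf H}y(k)-s_0(k)|^2$. Beamformers: RZF $w_{\rm RZF}(\lambda):=R_\lambda^{-1}h_0/(h_0^{\sf H}R_\lambda^{-1}h_0)$ with $R_\lambda:=R+\lambda h_1h_1^{\sf H}$, $\lambda\ge0$; MVDR $w_{\rm MVDR}:=w_{\rm RZF}(0)$; ZF $w_{\rm ZF}:=R^{-1}H(H^{\sf H}R^{-1}H)^{-1}e_1$ with $H=[h_0\ h_1]$, $e_1=[1,0]^{\sf T}$; MMSE-DR $w_{\rm MMSE\text{-}DR}:=\widetilde R^{-1}h_0/(h_0^{\sf H}\widetilde R^{-1}h_0)$ with $\widetilde R:=\sigma_n^2I+\sigma_1^2h_1h_1^{\sf H}$. $\mathrm{MSE}(\lambda):=J_{\rm MSE}(w_{\rm RZF}(\lambda))$, $\mathrm{MSE}_{\rm RZF}:=\inf_{\lambda\ge0}\mathrm{MSE}(\lambda)$, and $\mathrm{MSE}_X:=J_{\rm MSE}(w_X)$ for $X\in\{\rm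 MVDR,ZF,MMSE\text{-}DR\}$. *)

theory Defs
  imports "HOL-Analysis.Analysis"
begin

definition herm :: "complex^'n \<Rightarrow> complex^'n \<Rightarrow> complex" where
  "herm x y = (\<Sum>i\<in>UNIV. cnj (x$i) * y$i)"

definition outer :: "complex^'n \<Rightarrow> complex^'n \<Rightarrow> complex^'n^'n" where
  "outer x y = (\<chi> i j. x$i * cnj (y$j))"

definition hconj :: "complex^'n^'m \<Rightarrow> complex^'m^'n" where
  "hconj A = (\<chi> i j. cnj (A$j$i))"

definition smat :: "complex \<Rightarrow> complex^'n^'m \<Rightarrow> complex^'n^'m" where
  "smat c A = (\<chi> i j. c * A$i$j)"

(* R = E[y y^H] for y = s0 h0 + s1 h1 + n, with E|s_j|^2 = sj2, E[s0^* s1] = c1,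
   noise covariance sn2 I uncorrelated with the signals *)
definition Rcov :: "real \<Rightarrow> real \<Rightarrow> real \<Rightarrow> complex \<Rightarrow> complex^'n \<Rightarrow> complex^'n \<Rightarrow> complex^'n^'n" where
  "Rcov s02 s12 sn2 c1 h0 h1 =
     smat (of_real s02) (outer h0 h0) + smat (of_real s12) (outer h1 h1)
     + smat (cnj c1) (outer h0 h1) + smat c1 (outer h1 h0) + smat (of_real sn2) (mat 1)"

(* p = E[y s0^*] *)
definition pcross :: "real \<Rightarrow> complex \<Rightarrow> complex^'n \<Rightarrow> complex^'n \<Rightarrow> complex^'n" where
  "pcross s02 c1 h0 h1 = of_real s02 *s h0 + c1 *s h1"

(* J_MSE(w) = E|w^H y - s0|^2 = w^H R w - w^H p - p^H w + sigma0^2 *)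
definition JMSE :: "real \<Rightarrow> real \<Rightarrow> real \<Rightarrow> complex \<Rightarrow> complex^'n \<Rightarrow> complex^'n \<Rightarrow> complex^'n \<Rightarrow> real" where
  "JMSE s02 s12 sn2 c1 h0 h1 w =
     Re (herm w (Rcov s02 s12 sn2 c1 h0 h1 *v w) - herm w (pcross s02 c1 h0 h1)
         - herm (pcross s02 c1 h0 h1) w) + s02"

definition dlbf :: "complex^'n^'n \<Rightarrow> complex^'n \<Rightarrow> complex^'n" where
  "dlbf Q h0 = (1 / herm h0 (matrix_inv Q *v h0)) *s (matrix_inv Q *v h0)"

definition wRZF :: "real \<Rightarrow> real \<Rightarrow> real \<Rightarrow> complex \<Rightarrow> complex^'n \<Rightarrow> complex^'n \<Rightarrow> real \<Rightarrow> complex^'n" where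
  "wRZF s02 s12 sn2 c1 h0 h1 lam =
     dlbf (Rcov s02 s12 sn2 c1 h0 h1 + smat (of_real lam) (outer h1 h1)) h0"

definition wMVDR :: "real \<Rightarrow> real \<Rightarrow> real \<Rightarrow> complex \<Rightarrow> complex^'n \<Rightarrow> complex^'n \<Rightarrow> complex^'n" where
  "wMVDR s02 s12 sn2 c1 h0 h1 = wRZF s02 s12 sn2 c1 h0 h1 0"

definition Hmat :: "complex^'n \<Rightarrow> complex^'n \<Rightarrow> complex^2^'n" where
  "Hmat h0 h1 = (\<chi> i k. if k = 1 then h0$i else h1$i)"

definition e1 :: "complex^2" where
  "e1 = (\<chi> k. if k = 1 then 1 else 0)"

definition wZF :: "real \<Rightarrow> real \<Rightarrow> real \<Rightarrow> complex \<Rightarrow> complex^'n \<Rightarrow> complex^'n \<Rightarrow> complex^'n" where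
  "wZF s02 s12 sn2 c1 h0 h1 =
     (let Ri = matrix_inv (Rcov s02 s12 sn2 c1 h0 h1); H = Hmat h0 h1 in
      Ri *v (H *v (matrix_inv (hconj H ** Ri ** H) *v e1)))"

definition wMMSEDR :: "real \<Rightarrow> real \<Rightarrow> complex^'n \<Rightarrow> complex^'n \<Rightarrow> complex^'n" where
  "wMMSEDR s12 sn2 h0 h1 = dlbf (smat (of_real sn2) (mat 1) + smat (of_real s12) (outer h1 h1)) h0"

definition MSEfun :: "real \<Rightarrow> real \<Rightarrow> real \<Rightarrow> complex \<Rightarrow> complex^'n \<Rightarrow> complex^'n \<Rightarrow> real \<Rightarrow> real" where
  "MSEfun s02 s12 sn2 c1 h0 h1 lam = JMSE s02 s12 sn2 c1 h0 h1 (wRZF s02 s12 sn2 c1 h0 h1 lam)"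

definition MSE_RZF :: "real \<Rightarrow> real \<Rightarrow> real \<Rightarrow> complex \<Rightarrow> complex^'n \<Rightarrow> complex^'n \<Rightarrow> real" where
  "MSE_RZF s02 s12 sn2 c1 h0 h1 = (INF lam\<in>{0..}. MSEfun s02 s12 sn2 c1 h0 h1 lam)"

definition MSE_MVDR :: "real \<Rightarrow> real \<Rightarrow> real \<Rightarrow> complex \<Rightarrow> complex^'n \<Rightarrow> complex^'n \<Rightarrow> real" where
  "MSE_MVDR s02 s12 sn2 c1 h0 h1 = JMSE s02 s12 sn2 c1 h0 h1 (wMVDR s02 s12 sn2 c1 h0 h1)"

definition MSE_ZF :: "real \<Rightarrow> real \<Rightarrow> real \<Rightarrow> complex \<Rightarrow> complex^'n \<Rightarrow> complex^'n \<Rightarrow> real" where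
  "MSE_ZF s02 s12 sn2 c1 h0 h1 = JMSE s02 s12 sn2 c1 h0 h1 (wZF s02 s12 sn2 c1 h0 h1)"

definition MSE_MMSEDR :: "real \<Rightarrow> real \<Rightarrow> real \<Rightarrow> complex \<Rightarrow> complex^'n \<Rightarrow> complex^'n \<Rightarrow> real" where
  "MSE_MMSEDR s02 s12 sn2 c1 h0 h1 = JMSE s02 s12 sn2 c1 h0 h1 (wMMSEDR s12 sn2 h0 h1)"

end

theory Submission
  imports Defs
begin

lemma herm_add_right: "herm x (y + z) = herm x y + herm x z"
  by (simp add: herm_def sum.distrib distrib_left)
lemma herm_add_left: "herm (x + y) z = herm x z + herm y z"
  by (simp add: herm_def sum.distrib distrib_right)
lemma herm_diff_right: "herm x (y - z) = herm x y - herm x z"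
  by (simp add: herm_def sum_subtractf right_diff_distrib)
lemma herm_diff_left: "herm (x - y) z = herm x z - herm y z"
  by (simp add: herm_def sum_subtractf left_diff_distrib)
lemma herm_scale_right: "herm x (a *s y) = a * herm x y"
  by (simp add: herm_def sum_distrib_left mult.assoc mult.left_commute)
lemma herm_scale_left: "herm (a *s x) y = cnj a * herm x y"
  by (simp add: herm_def sum_distrib_left mult.assoc)
lemma herm_cnj: "cnj (herm x y) = herm y x"
  by (simp add: herm_def mult.commute)
lemma herm_self: "herm x x = of_real ((norm x)^2)"
proof -
  have "herm x x = (\<Sum>i\<in>UNIV. complex_of_real ((cmod (x$i))^2))"
    unfolding herm_def by (intro sum.cong refl) (metis complex_norm_square of_real_power mult.commute)
  also have "\<dots> = of_real (\<Sum>i\<in>UNIV. (cmod (x$i))^2)" by simp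
  also have "(\<Sum>i\<in>UNIV. (cmod (x$i))^2) = (norm x)^2"
    by (simp add: norm_vec_def L2_set_def sum_nonneg)
  finally show ?thesis .
qed
lemma herm_zero_right: "herm x 0 = 0" by (simp add: herm_def)

lemma outer_mv: "outer x y *v z = herm y z *s x"
  by (simp add: outer_def herm_def matrix_vector_mult_def vec_eq_iff sum_distrib_left mult.assoc mult.commute mult.left_commute)
lemma smat_mv: "smat c A *v z = c *s (A *v z)"
  by (simp add: smat_def matrix_vector_mult_def vec_eq_iff sum_distrib_left mult.assoc)

lemma inv_apply:
  fixes A :: "complex^'n^'n"
  assumes inj: "\<And>x. A *v x = 0 \<Longrightarrow> x = 0"
  shows "matrix_inv A ** A = mat 1" "A ** matrix_inv A = mat 1"
proof -
  have "\<exists>B. B ** A = mat 1" using inj matrix_left_invertible_ker by blast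
  hence "invertible A" using invertible_left_inverse by blast
  hence "\<exists>A'. A ** A' = mat 1 \<and> A' ** A = mat 1" by (simp add: invertible_def)
  hence "A ** matrix_inv A = mat 1 \<and> matrix_inv A ** A = mat 1"
    unfolding matrix_inv_def by (rule someI_ex)
  thus "matrix_inv A ** A = mat 1" "A ** matrix_inv A = mat 1" by auto
qed

lemma inv_apply_vec:
  fixes A :: "complex^'n^'n"
  assumes inj: "\<And>x. A *v x = 0 \<Longrightarrow> x = 0" and "A *v v = b"
  shows "matrix_inv A *v b = v"
  using inv_apply(1)[OF inj] assms(2) by (metis matrix_vector_mul_assoc matrix_vector_mul_lid)

lemma Rcov_mv: "(Rcov s02 s12 sn2 c1 h0 h1 + smat (of_real lam) (outer h1 h1)) *v v =
   (of_real s02 * herm h0 v + cnj c1 * herm h1 v) *s h0 + (of_real (s12 + lam) * herm h1 v + c1 * herm h0 v) *s h1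
   + of_real sn2 *s v"
  by (simp add: Rcov_def smat_mv outer_mv vec_eq_iff algebra_simps)

lemma Rcov_mv0: "Rcov s02 s12 sn2 c1 h0 h1 *v v =
   (of_real s02 * herm h0 v + cnj c1 * herm h1 v) *s h0 + (of_real s12 * herm h1 v + c1 * herm h0 v) *s h1
   + of_real sn2 *s v"
  by (simp add: Rcov_def smat_mv outer_mv vec_eq_iff algebra_simps)

lemma DR_mv: "(smat (of_real sn2) (mat 1) + smat (of_real s12) (outer h1 h1)) *v v =
   (of_real 0 * herm h0 v + cnj 0 * herm h1 v) *s h0 + (of_real s12 * herm h1 v + 0 * herm h0 v) *s h1
   + of_real sn2 *s v"
  by (simp add: smat_mv outer_mv vec_eq_iff algebra_simps)

lemma JMSE_dl:
  assumes "herm w h0 = 1"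
  shows "JMSE s02 s12 sn2 c1 h0 h1 w = s12 * (cmod (herm w h1))^2 + sn2 * (norm w)^2"
proof -
  have a: "herm h0 w = 1" using assms herm_cnj[of w h0] by simp
  have b: "herm h1 w = cnj (herm w h1)" using herm_cnj[of w h1] by simp
  define u where "u = herm w h1"
  have uu: "u * cnj u = of_real ((cmod u)^2)" by (metis complex_norm_square)
  have cu: "cmod u * cmod u = Re u*Re u + Im u*Im u" using cmod_power2[of u] by (simp add: power2_eq_square)
  show ?thesis
    unfolding JMSE_def Rcov_mv0 pcross_def
    by (simp add: herm_add_right herm_add_left herm_scale_right herm_scale_left a b assms herm_self
        u_def[symmetric] algebra_simps uu cu power2_eq_square)
qed

lemma mv_scale: "(A::complex^'n^'m) *v (k *s v) = k *s (A *v v)"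
  by (simp add: matrix_vector_mult_def vec_eq_iff sum_distrib_left mult.left_commute)

lemma psd2:
  fixes a L k P Q :: real
  assumes "a \<ge> 0" "L \<ge> 0" "k \<ge> 0" "k^2 \<le> a * L" "P \<ge> 0" "Q \<ge> 0"
  shows "2 * k * P * Q \<le> a * P^2 + L * Q^2"
proof -
  have "(2*k*P*Q)^2 = 4 * k^2 * P^2 * Q^2" by (simp add: power_mult_distrib)
  also have "\<dots> \<le> 4 * (a*L) * P^2 * Q^2" using assms by (intro mult_right_mono) auto
  also have "\<dots> \<le> (a * P^2 + L * Q^2)^2"
  proof -
    have e: "(a * P^2 + L * Q^2)^2 - 4 * (a*L) * P^2 * Q^2 = (a*P^2 - L*Q^2)^2" by algebra
    have "(a*P^2 - L*Q^2)^2 \<ge> 0" by simp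
    thus ?thesis using e by linarith
  qed
  finally have "(2*k*P*Q)^2 \<le> (a * P^2 + L * Q^2)^2" .
  moreover have "a * P^2 + L * Q^2 \<ge> 0" using assms by simp
  ultimately show ?thesis by (rule power2_le_imp_le)
qed

lemma Q_inj:
  fixes Q :: "complex^'n^'n" and a L sn2 :: real and cc :: complex
  assumes Qv: "\<And>v. Q *v v = (of_real a * herm h0 v + cnj cc * herm h1 v) *s h0
        + (of_real L * herm h1 v + cc * herm h0 v) *s h1 + of_real sn2 *s v"
    and a: "a \<ge> 0" and L: "L \<ge> 0" and sn: "sn2 > 0" and cc: "(cmod cc)^2 \<le> a * L"
    and Q0: "Q *v v = 0"
  shows "v = 0"
proof -
  define p where "p = herm h0 v"
  define q where "q = herm h1 v"
  define z where "z = cc * p * cnj q"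
  have vp: "herm v h0 = cnj p" "herm v h1 = cnj q" using herm_cnj p_def q_def by metis+
  have pp: "(complex_of_real (cmod p))^2 = p * cnj p" "(complex_of_real (cmod q))^2 = q * cnj q"
    by (metis complex_norm_square of_real_power)+
  have "herm v (Q *v v) = of_real (a * (cmod p)^2 + L * (cmod q)^2 + sn2 * (norm v)^2) + (z + cnj z)"
    unfolding Qv herm_add_right herm_scale_right vp herm_self
    by (simp add: p_def[symmetric] q_def[symmetric] z_def algebra_simps pp)
  hence e: "0 = a * (cmod p)^2 + L * (cmod q)^2 + sn2 * (norm v)^2 + 2 * Re z"
    using Q0 by (simp add: herm_zero_right complex_eq_iff)
  have "- Re z \<le> cmod z" using abs_Re_le_cmod[of z] by linarith
  also have "cmod z = cmod cc * cmod p * cmod q" by (simp add: z_def norm_mult)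
  finally have "- Re z \<le> cmod cc * cmod p * cmod q" .
  moreover have "2 * cmod cc * cmod p * cmod q \<le> a * (cmod p)^2 + L * (cmod q)^2"
    by (rule psd2) (use a L cc in auto)
  ultimately have "sn2 * (norm v)^2 \<le> 0" using e by linarith
  hence "(norm v)^2 \<le> 0" using sn by (simp add: mult_le_0_iff)
  thus "v = 0" by simp
qed

lemma Hmv: "Hmat h0 h1 *v z = z$1 *s h0 + z$2 *s h1"
  by (simp add: Hmat_def matrix_vector_mult_def vec_eq_iff sum_2 mult.commute)

lemma HHmv: "(hconj (Hmat h0 h1) *v w) $ k = (if k = 1 then herm h0 w else herm h1 w)"
  by (simp add: Hmat_def hconj_def matrix_vector_mult_def herm_def)

locale geo =
  fixes h0 h1 :: "complex^'n" and \<rho> :: complex and c :: real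
  assumes n0: "norm h0 = 1" and n1: "norm h1 = 1" and r: "herm h0 h1 = \<rho>"
    and cpos: "c > 0" and rc: "(cmod \<rho>)^2 + c^2 = 1"
begin

definition "gv = of_real (1/c) *s (h1 - \<rho> *s h0)"
definition "W x = h0 + x *s gv"

lemma h00: "herm h0 h0 = 1" using herm_self[of h0] n0 by simp
lemma h11: "herm h1 h1 = 1" using herm_self[of h1] n1 by simp
lemma h10: "herm h1 h0 = cnj \<rho>" using herm_cnj[of h0 h1] r by simp
lemma rr: "\<rho> * cnj \<rho> = of_real (1 - c^2)"
  using rc complex_norm_square[of \<rho>] by (metis add_diff_cancel_right')

lemma h0g: "herm h0 gv = 0"
  by (simp add: gv_def herm_scale_right herm_diff_right h00 r)
lemma hg0: "herm gv h0 = 0" using herm_cnj[of h0 gv] h0g by simp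
lemma h1g: "herm h1 gv = c"
proof -
  have "herm h1 gv = of_real (1/c) * (1 - \<rho> * cnj \<rho>)"
    unfolding gv_def herm_scale_right herm_diff_right h11 h10 by (simp add: mult.commute)
  also have "\<dots> = of_real (1/c * (1 - (1 - c^2)))" by (simp add: rr)
  also have "\<dots> = c" using cpos by (simp add: power2_eq_square)
  finally show ?thesis .
qed
lemma hg1: "herm gv h1 = c" using herm_cnj[of h1 gv] h1g by simp
lemma hgg: "herm gv gv = 1"
proof -
  have "herm gv gv = of_real (1/c) * (herm gv h1 - \<rho> * herm gv h0)"
    unfolding gv_def[of] herm_scale_right herm_diff_right by (simp add: gv_def)
  also have "\<dots> = 1" using cpos by (simp add: hg1 hg0)
  finally show ?thesis .
qed

lemma hW0: "herm h0 (W x) = 1" by (simp add: W_def herm_add_right herm_scale_right h00 h0g)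
lemma hW0': "herm (W x) h0 = 1" by (simp add: W_def herm_add_left herm_scale_left h00 hg0)
lemma hW1: "herm (W x) h1 = \<rho> + c * cnj x" by (simp add: W_def herm_add_left herm_scale_left r hg1 mult.commute)
lemma hW1': "herm h1 (W x) = cnj \<rho> + complex_of_real c * x" by (simp add: W_def herm_add_right herm_scale_right h10 h1g mult.commute)
lemma normW: "(norm (W x))^2 = 1 + (cmod x)^2"
proof -
  have "herm (W x) (W x) = 1 + x * cnj x"
    by (simp add: W_def herm_add_left herm_add_right herm_scale_left herm_scale_right h00 h0g hg0 hgg)
  hence "complex_of_real ((norm (W x))^2) = complex_of_real (1 + (cmod x)^2)"
    by (simp add: herm_self) (metis complex_norm_square of_real_power)
  thus ?thesis using of_real_eq_iff by blast
qed

lemma JMSE_W: "JMSE s02 s12 sn2 c1 h0 h1 (W x) = s12 * (cmod (\<rho> + c * cnj x))^2 + sn2 * (1 + (cmod x)^2)"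
  by (simp add: JMSE_dl hW0' hW1 normW)


lemma dlbf_gen:
  fixes Q :: "complex^'n^'n" and a L sn2 :: real and cc :: complex
  assumes Qv: "\<And>v. Q *v v = (of_real a * herm h0 v + cnj cc * herm h1 v) *s h0
        + (of_real L * herm h1 v + cc * herm h0 v) *s h1 + of_real sn2 *s v"
    and a: "a \<ge> 0" and L: "L \<ge> 0" and sn: "sn2 > 0" and cc: "(cmod cc)^2 \<le> a * L"
  shows "dlbf Q h0 = W (- (of_real c * (of_real L * cnj \<rho> + cc)) / of_real (L*c^2+sn2))"
proof -
  have inj: "v = 0" if "Q *v v = 0" for v using Q_inj[OF Qv a L sn cc that] .
  define D where "D = L*c^2+sn2"
  have Dp: "D > 0" using L sn cpos unfolding D_def by (simp add: add_nonneg_pos)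
  define x where "x = - (of_real c * (of_real L * cnj \<rho> + cc)) / of_real D"
  have C: "complex_of_real c \<noteq> 0" using cpos by simp
  have Dc: "complex_of_real D \<noteq> 0" using Dp by simp
  have xd: "x * of_real D = - (of_real c * (of_real L * cnj \<rho> + cc))" using Dc by (simp add: x_def)
  have Deq: "complex_of_real D = of_real L * (of_real c * of_real c) + of_real sn2" by (simp add: D_def power2_eq_square)
  have "of_real c * (of_real L * (cnj \<rho> + of_real c * x) + cc + (of_real sn2 * x / of_real c))
      = of_real c * (of_real L * cnj \<rho> + cc) + x * (of_real L * (of_real c * of_real c) + of_real sn2)"
    using C by (simp add: field_simps)
  also have "\<dots> = 0" using xd Deq by simp
  finally have "of_real L * (cnj \<rho> + of_real c * x) + cc + (of_real sn2 * x / of_real c) = 0" using C by simp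
  hence Bz: "of_real L * (cnj \<rho> + of_real c * x) + cc = - (of_real sn2 * x / of_real c)"
    by (simp add: eq_neg_iff_add_eq_0)
  define \<kappa> where "\<kappa> = of_real a + cnj cc * (cnj \<rho> + of_real c * x) + of_real sn2 - of_real sn2 * x * \<rho> / of_real c"
  have Qw: "Q *v W x = \<kappa> *s h0"
  proof -
    have "Q *v W x = (of_real a + cnj cc * (cnj \<rho> + of_real c * x)) *s h0
        + (- (of_real sn2 * x / of_real c)) *s h1 + of_real sn2 *s W x"
      unfolding Qv hW0 hW1' Bz[symmetric] by simp
    also have "\<dots> = \<kappa> *s h0"
      using cpos unfolding W_def gv_def \<kappa>_def
      by (simp add: vec_eq_iff field_simps)
    finally show ?thesis .
  qed
  have kn: "\<kappa> \<noteq> 0"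
  proof
    assume "\<kappa> = 0"
    hence "W x = 0" using Qw inj by simp
    thus False using hW0[of x] by (simp add: herm_zero_right)
  qed
  have "Q *v ((1/\<kappa>) *s W x) = h0" using kn by (simp add: mv_scale Qw vector_smult_assoc)
  hence mi: "matrix_inv Q *v h0 = (1/\<kappa>) *s W x" using inv_apply_vec[of Q] inj by blast
  have "dlbf Q h0 = W x"
    unfolding dlbf_def mi herm_scale_right hW0 using kn by (simp add: vector_smult_assoc)
  thus ?thesis unfolding x_def D_def .
qed

lemma wZF_eq:
  fixes s02 s12 sn2 :: real and c1 :: complex
  assumes a: "s02 \<ge> 0" and L: "s12 \<ge> 0" and sn: "sn2 > 0" and cc: "(cmod c1)^2 \<le> s02 * s12"
  shows "wZF s02 s12 sn2 c1 h0 h1 = W (- cnj \<rho> / of_real c)"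
proof -
  define R where "R = Rcov s02 s12 sn2 c1 h0 h1"
  have Rv: "\<And>v. R *v v = (of_real s02 * herm h0 v + cnj c1 * herm h1 v) *s h0
        + (of_real s12 * herm h1 v + c1 * herm h0 v) *s h1 + of_real sn2 *s v"
    unfolding R_def by (rule Rcov_mv0)
  have injR: "v = 0" if "R *v v = 0" for v using Q_inj[OF Rv a L sn cc that] .
  define H where "H = Hmat h0 h1"
  define x0 where "x0 = - cnj \<rho> / complex_of_real c"
  have C: "complex_of_real c \<noteq> 0" using cpos by simp
  have hh1: "herm h1 (W x0) = 0" unfolding hW1' x0_def using C by simp
  define z :: "complex^2" where "z = vector [of_real s02 + of_real sn2 - of_real sn2 * x0 * \<rho> / of_real c,
      c1 + of_real sn2 * x0 / of_real c]"
  have Rw: "R *v W x0 = H *v z"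
    unfolding Rv hW0 hh1 H_def Hmv z_def using C
    by (simp add: W_def gv_def vec_eq_iff field_simps)
  have RiHz: "matrix_inv R *v (H *v z) = W x0" using inv_apply_vec[of R] injR Rw by blast
  define M where "M = hconj H ** matrix_inv R ** H"
  have HHmv': "\<And>w k. (hconj H *v w) $ k = (if k = 1 then herm h0 w else herm h1 w)"
    unfolding H_def by (rule HHmv)
  have Mz: "M *v z = e1"
    unfolding M_def by (simp add: matrix_vector_mul_assoc[symmetric] RiHz vec_eq_iff HHmv' e1_def hW0 hh1)
  have injM: "y = 0" if My: "M *v y = 0" for y
  proof -
    define q where "q = matrix_inv R *v (H *v y)"
    have "hconj H *v q = 0" using My unfolding M_def q_def by (simp add: matrix_vector_mul_assoc[symmetric])
    hence hq: "herm h0 q = 0" "herm h1 q = 0" using HHmv[of h0 h1 q 1] HHmv[of h0 h1 q 2]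
      unfolding H_def by (auto simp: vec_eq_iff)
    have "R *v q = H *v y" unfolding q_def
      using inv_apply(2)[of R] injR by (metis matrix_vector_mul_assoc matrix_vector_mul_lid)
    moreover have "R *v q = of_real sn2 *s q" unfolding Rv hq by simp
    ultimately have Hy: "H *v y = of_real sn2 *s q" by simp
    have hq': "herm q h0 = 0" "herm q h1 = 0" using hq herm_cnj by (metis complex_cnj_zero)+
    have "herm q (H *v y) = 0" unfolding H_def Hmv herm_add_right herm_scale_right hq' by simp
    hence "complex_of_real sn2 * complex_of_real ((norm q)^2) = 0" unfolding Hy herm_scale_right herm_self .
    hence "q = 0" using sn by simp
    hence Hy0: "y$1 *s h0 + y$2 *s h1 = 0" using Hy unfolding H_def Hmv by simp
    have e0: "y$1 + y$2 * \<rho> = 0" using arg_cong[OF Hy0, of "herm h0"]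
      by (simp add: herm_add_right herm_scale_right h00 r herm_zero_right)
    have e1': "y$1 * cnj \<rho> + y$2 = 0" using arg_cong[OF Hy0, of "herm h1"]
      by (simp add: herm_add_right herm_scale_right h11 h10 herm_zero_right)
    have "y$2 * (1 - \<rho> * cnj \<rho>) = 0"
    proof -
      have "y$1 = - (y$2 * \<rho>)" using e0 by (simp add: eq_neg_iff_add_eq_0)
      thus ?thesis using e1' by (simp add: algebra_simps)
    qed
    moreover have "1 - \<rho> * cnj \<rho> \<noteq> 0" unfolding rr using cpos by simp
    ultimately have y2: "y$2 = 0" by simp
    hence "y$1 = 0" using e0 by simp
    thus "y = 0" using y2 by (simp add: vec_eq_iff forall_2)
  qed
  have "matrix_inv M *v e1 = z" using inv_apply_vec[of M] injM Mz by blast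
  hence "wZF s02 s12 sn2 c1 h0 h1 = W x0"
    unfolding wZF_def Let_def R_def[symmetric] H_def[symmetric] M_def[symmetric] using RiHz by simp
  thus ?thesis unfolding x0_def .
qed

end

lemma cmod_add_sq: "(cmod (u + v))^2 = (cmod u)^2 + 2 * Re (u * cnj v) + (cmod v)^2"
  by (simp only: cmod_power2) (simp add: power2_eq_square algebra_simps)

lemma cmod_diff_sq: "(cmod (u - v))^2 = (cmod u)^2 - 2 * Re (u * cnj v) + (cmod v)^2"
  by (simp only: cmod_power2) (simp add: power2_eq_square algebra_simps)

lemma quad_id:
  fixes c P sn2 s12 K M R D :: real
  assumes c: "c > 0" and D: "P = D - sn2" "D \<noteq> 0" and R: "R = 1 - c^2"
  shows "s12 * ((sn2^2*R - 2 * sn2*c^2*K + c^4*M)/D^2) + sn2*(1 + (P^2*R/c^2 + 2*P*K + c^2*M)/D^2)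
     = sn2/c^2 - 2*(sn2^2*R/c^2 - sn2*K)/D + (s12*c^2+sn2)*((sn2^2*R - 2 * sn2*c^2*K + c^4*M)/c^2)/D^2"
  using c D unfolding R D by (simp add: field_simps) algebra

context geo begin

lemma JMSE_x:
  fixes L sn2 :: real and cc :: complex
  assumes D: "L * c^2 + sn2 > 0"
  shows "JMSE s02 s12 sn2 c1 h0 h1 (W (- (of_real c * (of_real L * cnj \<rho> + cc)) / of_real (L*c^2+sn2)))
    = sn2/c^2 - 2*(sn2^2*(cmod \<rho>)^2/c^2 - sn2*Re (\<rho>*cc))/(L*c^2+sn2)
      + (s12*c^2+sn2)*((sn2^2*(cmod \<rho>)^2 - 2 * sn2*c^2*Re (\<rho>*cc) + c^4*(cmod cc)^2)/c^2)/(L*c^2+sn2)^2"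
proof -
  define D where "D = L*c^2+sn2"
  define x where "x = - (of_real c * (of_real L * cnj \<rho> + cc)) / complex_of_real D"
  have "D \<noteq> 0" using D unfolding D_def by simp
  hence Dc: "complex_of_real D \<noteq> 0" by simp
  have Deq: "complex_of_real D = of_real L * (of_real c * of_real c) + of_real sn2" by (simp add: D_def power2_eq_square)
  have e1: "\<rho> + of_real c * cnj x = (of_real sn2 * \<rho> - of_real (c^2) * cnj cc) / of_real D"
    using Dc unfolding x_def by (simp add: field_simps) (simp add: Deq algebra_simps power2_eq_square)
  have e2: "x = - (of_real c * (of_real L * cnj \<rho> + cc)) / of_real D" by (simp add: x_def)
  have n1: "(cmod (\<rho> + of_real c * cnj x))^2 = (sn2^2*(cmod \<rho>)^2 - 2 * sn2*c^2*Re (\<rho>*cc) + c^4*(cmod cc)^2)/D^2"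
  proof -
    have a1: "(cmod (of_real sn2 * \<rho>))^2 = sn2^2 * (cmod \<rho>)^2" by (simp add: norm_mult power_mult_distrib)
    have a2: "(cmod (of_real (c^2) * cnj cc))^2 = c^4 * (cmod cc)^2"
      by (simp add: norm_mult power_mult_distrib norm_power flip: power_mult of_real_power)
    have a3: "Re (of_real sn2 * \<rho> * cnj (of_real (c^2) * cnj cc)) = sn2*c^2*Re(\<rho>*cc)" by (simp add: algebra_simps)
    have "(cmod (of_real sn2 * \<rho> - of_real (c^2) * cnj cc))^2 = sn2^2*(cmod \<rho>)^2 - 2 * sn2*c^2*Re (\<rho>*cc) + c^4*(cmod cc)^2"
      unfolding cmod_diff_sq a1 a2 a3 by simp
    thus ?thesis unfolding e1 by (simp add: norm_divide power_divide)
  qed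
  have n2: "(cmod x)^2 = ((L*c^2)^2*(cmod \<rho>)^2/c^2 + 2*(L*c^2)*Re (\<rho>*cc) + c^2*(cmod cc)^2)/D^2"
  proof -
    have cc2: "c^2*(L^2*(cmod \<rho>)^2 + 2*L*Re (\<rho>*cc) + (cmod cc)^2) = ((L*c^2)^2*(cmod \<rho>)^2/c^2 + 2*(L*c^2)*Re (\<rho>*cc) + c^2*(cmod cc)^2)"
      using cpos by (simp add: field_simps power2_eq_square)
    have "(cmod (of_real L * cnj \<rho> + cc))^2 = L^2*(cmod \<rho>)^2 + 2*L*Re (\<rho>*cc) + (cmod cc)^2"
      unfolding cmod_add_sq by (simp add: norm_mult power_mult_distrib algebra_simps)
    thus ?thesis unfolding e2 cc2[symmetric] by (simp add: norm_divide power_divide norm_mult power_mult_distrib)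
  qed
  have R: "(cmod \<rho>)^2 = 1 - c^2" using rc by simp
  show ?thesis
    unfolding JMSE_W x_def[symmetric] D_def[symmetric] n1 n2
    using quad_id[OF cpos _ _ R, of "L*c^2" D sn2 s12 "Re (\<rho>*cc)" "(cmod cc)^2"] D \<open>D \<noteq> 0\<close>
    unfolding D_def[symmetric] by (simp add: D_def)
qed

end

lemma inf_attained:
  fixes f :: "real \<Rightarrow> real"
  assumes "x0 \<in> A" "\<And>x. x \<in> A \<Longrightarrow> f x0 \<le> f x"
  shows "(INF x\<in>A. f x) = f x0"
proof (rule antisym)
  have "bdd_below (f ` A)" using assms by (intro bdd_belowI[of _ "f x0"]) auto
  thus "(INF x\<in>A. f x) \<le> f x0" using assms by (intro cINF_lower) auto
  show "f x0 \<le> (INF x\<in>A. f x)" using assms by (intro cINF_greatest) auto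
qed

lemma inf_a:
  fixes T Bq Cq u0 :: real
  assumes u0: "u0 > 0" and C: "Cq \<ge> 0" and B: "Bq \<le> 0"
  shows "(INF u\<in>{0<..u0}. T - 2*Bq*u + Cq*u^2) = T"
proof (rule antisym)
  have lb: "T \<le> T - 2*Bq*u + Cq*u^2" if "u \<in> {0<..u0}" for u
  proof -
    have "0 \<le> - 2*Bq*u" using B that by (simp add: mult_nonpos_nonneg)
    moreover have "0 \<le> Cq*u^2" using C by simp
    ultimately show ?thesis by linarith
  qed
  show "T \<le> (INF u\<in>{0<..u0}. T - 2*Bq*u + Cq*u^2)" using u0 lb by (intro cINF_greatest) auto
  have bdd: "bdd_below ((\<lambda>u. T - 2*Bq*u + Cq*u^2) ` {0<..u0})"
    using lb by (intro bdd_belowI[of _ T]) auto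
  show "(INF u\<in>{0<..u0}. T - 2*Bq*u + Cq*u^2) \<le> T"
  proof (rule field_le_epsilon)
    fix e :: real assume e: "e > 0"
    define A where "A = 2*(-Bq) + Cq + 1"
    have A: "A \<ge> 1" using B C unfolding A_def by simp
    define u where "u = min u0 (min 1 (e / A))"
    have u: "u > 0" "u \<le> u0" "u \<le> 1" "u \<le> e / A" using u0 e A unfolding u_def by auto
    have "Cq*u^2 \<le> Cq * u" using C u by (simp add: mult_left_mono power2_eq_square mult_le_cancel_left1)
    hence "T - 2*Bq*u + Cq*u^2 \<le> T + A * u" unfolding A_def using u by (simp add: algebra_simps)
    also have "A * u \<le> e" using u(4) A by (simp add: field_simps)
    finally have "T - 2*Bq*u + Cq*u^2 \<le> T + e" by simp
    moreover have "(INF u\<in>{0<..u0}. T - 2*Bq*u + Cq*u^2) \<le> T - 2*Bq*u + Cq*u^2"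
      using u bdd by (intro cINF_lower) auto
    ultimately show "(INF u\<in>{0<..u0}. T - 2*Bq*u + Cq*u^2) \<le> T + e" by linarith
  qed
qed

lemma inf_b:
  fixes T Bq Cq u0 :: real
  assumes u0: "u0 > 0" and C: "Cq \<ge> 0" and B: "Bq \<ge> Cq * u0"
  shows "(INF u\<in>{0<..u0}. T - 2*Bq*u + Cq*u^2) = T - 2*Bq*u0 + Cq*u0^2"
proof (rule inf_attained)
  show "u0 \<in> {0<..u0}" using u0 by simp
  fix u assume u: "u \<in> {0<..u0}"
  have "(T - 2*Bq*u + Cq*u^2) - (T - 2*Bq*u0 + Cq*u0^2) = (u0 - u) * (2*Bq - Cq*(u+u0))"
    by (simp add: algebra_simps power2_eq_square)
  moreover have "0 \<le> (u0 - u) * (2*Bq - Cq*(u+u0))"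
  proof (rule mult_nonneg_nonneg)
    show "0 \<le> u0 - u" using u by simp
    have "Cq*(u+u0) \<le> Cq*(u0+u0)" using u C by (intro mult_left_mono) auto
    thus "0 \<le> 2*Bq - Cq*(u+u0)" using B by simp
  qed
  ultimately show "T - 2*Bq*u0 + Cq*u0^2 \<le> T - 2*Bq*u + Cq*u^2" by linarith
qed

lemma inf_c:
  fixes T Bq Cq u0 :: real
  assumes u0: "u0 > 0" and C: "Cq > 0" and B: "0 < Bq" "Bq < Cq * u0"
  shows "(INF u\<in>{0<..u0}. T - 2*Bq*u + Cq*u^2) = T - Bq^2/Cq"
proof -
  have "(INF u\<in>{0<..u0}. T - 2*Bq*u + Cq*u^2) = T - 2*Bq*(Bq/Cq) + Cq*(Bq/Cq)^2"
  proof (rule inf_attained)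
    show "Bq/Cq \<in> {0<..u0}" using B C by (auto simp: field_simps)
    fix u assume u: "u \<in> {0<..u0}"
    have "(T - 2*Bq*u + Cq*u^2) - (T - 2*Bq*(Bq/Cq) + Cq*(Bq/Cq)^2) = Cq * (u - Bq/Cq)^2"
      using C by (simp add: field_simps power2_eq_square)
    moreover have "Cq * (u - Bq/Cq)^2 \<ge> 0" using C by simp
    ultimately show "T - 2*Bq*(Bq/Cq) + Cq*(Bq/Cq)^2 \<le> T - 2*Bq*u + Cq*u^2" by linarith
  qed
  also have "\<dots> = T - Bq^2/Cq" using C by (simp add: field_simps power2_eq_square)
  finally show ?thesis .
qed

theorem theorem5:
  fixes h0 h1 :: "complex^'n"
    and s0 s1 sn tau phiz phic :: real
    and c1 :: complex
  assumes "CARD('n) \<ge> 2"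
    and "norm h0 = 1" and "norm h1 = 1"
    and "herm h0 h1 = of_real (sin tau) * cis phiz"
    and "0 \<le> tau" and "tau < pi/2"
    and "0 \<le> phiz" and "phiz < 2*pi"
    and "s0 > 0" and "s1 > 0" and "sn > 0"
    and "c1 = of_real (cmod c1) * cis phic"
    and "cmod c1 \<le> s0 * s1"
  defines "d1 \<equiv> sn^2 * tan tau - cmod c1 * cos tau * cos (phic + phiz)"
    and "d2 \<equiv> of_real (sn^2 * tan tau) - of_real (cmod c1 * cos tau) * cis (phic + phiz)"
    and "mMVDR \<equiv> MSE_MVDR (s0^2) (s1^2) (sn^2) c1 h0 h1"
    and "mZF \<equiv> MSE_ZF (s0^2) (s1^2) (sn^2) c1 h0 h1"
    and "mDR \<equiv> MSE_MMSEDR (s0^2) (s1^2) (sn^2) c1 h0 h1"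
    and "mRZF \<equiv> MSE_RZF (s0^2) (s1^2) (sn^2) c1 h0 h1"
  shows "mMVDR = (sn^2 * (s1^2 + sn^2) + (cmod c1)^2 * (cos tau)^2) / (s1^2 * (cos tau)^2 + sn^2)
       \<and> mZF = sn^2 * ((tan tau)^2 + 1)
       \<and> mDR = (sn^2 * (s1^2 + sn^2)) / (s1^2 * (cos tau)^2 + sn^2)
       \<and> (d2 = 0 \<longrightarrow> (\<forall>lam\<ge>0. MSEfun (s0^2) (s1^2) (sn^2) c1 h0 h1 lam = mZF \<and> mZF = mMVDR))
       \<and> (d2 \<noteq> 0 \<longrightarrow>
           (let gam = d1 * sn^2 * tan tau / (cmod d2)^2 in
             (gam \<le> 0 \<longrightarrow> mRZF = mZF)
           \<and> (0 < gam \<and> gam < 1 \<longrightarrow>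
                mRZF = mDR + (1 - (cmod (of_real d1 / d2))^2) * (sn^4 * (tan tau)^2) / (s1^2 * (cos tau)^2 + sn^2))
           \<and> (gam \<ge> 1 \<longrightarrow> mRZF = mMVDR)))"
proof -
  note A = assms
  define \<rho> where "\<rho> = herm h0 h1"
  define c where "c = cos tau"
  define s where "s = sin tau"
  define S where "S = sn^2"
  define P where "P = s1^2"
  define m where "m = cmod c1"
  define k where "k = cos (phic + phiz)"
  have cpos: "c > 0" unfolding c_def using A(5,6) by (intro cos_gt_zero_pi) auto
  have sge: "s \<ge> 0" unfolding s_def using A(5,6) by (intro sin_ge_zero) auto
  have sc: "s^2 + c^2 = 1" unfolding s_def c_def by simp
  have cmr: "cmod \<rho> = s" unfolding \<rho>_def A(4) s_def using sge[unfolded s_def] by (simp add: norm_mult)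
  have rc: "(cmod \<rho>)^2 + c^2 = 1" using cmr sc by simp
  interpret G: geo h0 h1 \<rho> c using A(2,3) \<rho>_def cpos rc by unfold_locales auto
  have Sp: "S > 0" unfolding S_def using A(11) by simp
  have Pp: "P > 0" unfolding P_def using A(10) by simp
  have mge: "m \<ge> 0" unfolding m_def by simp
  have c1b: "(cmod c1)^2 \<le> s0^2 * s1^2"
  proof -
    have "(cmod c1)^2 \<le> (s0* s1)^2" using A(13) by (intro power_mono) auto
    thus ?thesis by (simp add: power_mult_distrib)
  qed
  have tn: "tan tau = s / c" unfolding s_def c_def by (simp add: tan_def)
  have K: "Re (\<rho> * c1) = s * m * k"
  proof -
    have "\<rho> * c1 = of_real (s * m) * cis (phiz + phic)"
      unfolding \<rho>_def A(4) s_def m_def by (subst A(12)) (simp add: cis_mult algebra_simps)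
    thus ?thesis unfolding k_def by (simp add: add.commute)
  qed
  define T where "T = S / c^2"
  define E where "E = P * c^2 + S"
  have Ep: "E > 0" unfolding E_def using Pp Sp cpos by (simp add: add_pos_pos)
  define Bq where "Bq = S^2 * s^2 / c^2 - S * (s * m * k)"
  define N where "N = (S^2 * s^2 - 2 * S * c^2 * (s*m*k) + c^4 * m^2) / c^2"
  define U where "U = (\<lambda>lam::real. 1 / ((P + lam) * c^2 + S))"
  have mse: "MSEfun (s0^2) (s1^2) (sn^2) c1 h0 h1 lam = T - 2*Bq*U lam + (E*N)*(U lam)^2" if lam: "lam \<ge> 0" for lam
  proof -
    have D: "(s1^2 + lam) * c^2 + sn^2 > 0" using A(10,11) lam cpos by (simp add: add_nonneg_pos)
    have cb: "(cmod c1)^2 \<le> s0^2 * (s1^2 + lam)"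
      using c1b lam by (smt (verit) mult_left_mono zero_le_power2)
    have w: "wRZF (s0^2) (s1^2) (sn^2) c1 h0 h1 lam
        = G.W (- (of_real c * (of_real (s1^2 + lam) * cnj \<rho> + c1)) / of_real ((s1^2 + lam)*c^2+sn^2))"
      unfolding wRZF_def by (rule G.dlbf_gen[OF Rcov_mv]) (use A(11) lam cb in auto)
    have "MSEfun (s0^2) (s1^2) (sn^2) c1 h0 h1 lam
      = sn^2/c^2 - 2*((sn^2)^2*(cmod \<rho>)^2/c^2 - sn^2*Re (\<rho>*c1))/((s1^2 + lam)*c^2+sn^2)
      + (s1^2*c^2+sn^2)*(((sn^2)^2*(cmod \<rho>)^2 - 2* sn^2*c^2*Re (\<rho>*c1) + c^4*(cmod c1)^2)/c^2)/((s1^2 + lam)*c^2+sn^2)^2"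
      unfolding MSEfun_def w by (rule G.JMSE_x[OF D])
    thus ?thesis unfolding T_def Bq_def N_def E_def U_def K cmr S_def P_def m_def
      by (simp add: power_divide field_simps)
  qed
  have s2: "s^2 = 1 - c^2" using sc by simp
  have cn: "c \<noteq> 0" using cpos by simp
  have En: "E \<noteq> 0" using Ep by simp
  have Eeq: "s1^2 * (cos tau)^2 + sn^2 = E" unfolding E_def P_def S_def c_def ..
  have T2: "sn^2 * ((tan tau)^2 + 1) = T" unfolding T_def S_def tn using cpos s2
    by (simp add: field_simps power_divide)
  have zf: "mZF = T"
  proof -
    have w: "wZF (s0^2) (s1^2) (sn^2) c1 h0 h1 = G.W (- cnj \<rho> / of_real c)"
      by (rule G.wZF_eq) (use A(11) c1b in auto)
    have e0: "\<rho> + of_real c * cnj (- cnj \<rho> / of_real c) = 0" using cn by (simp add: field_simps)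
    have e1: "(cmod (- cnj \<rho> / of_real c))^2 = s^2 / c^2" using cmr cpos by (simp add: norm_divide power_divide)
    show ?thesis unfolding mZF_def MSE_ZF_def w G.JMSE_W e0 e1 T_def S_def using cpos s2
      by (simp add: field_simps)
  qed
  have dr: "mDR = (sn^2 * (s1^2 + sn^2)) / (s1^2 * (cos tau)^2 + sn^2)"
  proof -
    have D: "s1^2 * c^2 + sn^2 > 0" using Ep unfolding E_def P_def S_def .
    have w: "wMMSEDR (s1^2) (sn^2) h0 h1
        = G.W (- (of_real c * (of_real (s1^2) * cnj \<rho> + 0)) / of_real (s1^2*c^2+sn^2))"
      unfolding wMMSEDR_def by (rule G.dlbf_gen[OF DR_mv]) (use A(11) in auto)
    have "mDR = sn^2/c^2 - 2*((sn^2)^2*(cmod \<rho>)^2/c^2 - sn^2*Re (\<rho>*0))/(s1^2*c^2+sn^2)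
      + (s1^2*c^2+sn^2)*(((sn^2)^2*(cmod \<rho>)^2 - 2* sn^2*c^2*Re (\<rho>*0) + c^4*(cmod 0)^2)/c^2)/(s1^2*c^2+sn^2)^2"
      unfolding mDR_def MSE_MMSEDR_def w by (rule G.JMSE_x[OF D])
    also have "\<dots> = S/c^2 - (S^2* s^2/c^2)/E" unfolding cmr S_def[symmetric] P_def[symmetric] E_def[symmetric]
      using En by (simp add: field_simps power2_eq_square)
    also have "\<dots> = (S*E - S^2*(1-c^2))/(c^2*E)" using cpos En unfolding s2 by (simp add: field_simps)
    also have "S*E - S^2*(1-c^2) = c^2 * (S*(P+S))" unfolding E_def by (simp add: algebra_simps power2_eq_square)
    also have "c^2 * (S*(P+S)) / (c^2*E) = S * (P + S) / E" using cpos by simp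
    finally show ?thesis unfolding Eeq S_def P_def .
  qed
  have U0: "U 0 = 1/E" unfolding U_def E_def by simp
  have mv0: "mMVDR = T - 2*Bq*(1/E) + (E*N)*(1/E)^2"
    unfolding mMVDR_def MSE_MVDR_def wMVDR_def using mse[of 0] U0 by (simp add: MSEfun_def)
  have mv: "mMVDR = (sn^2 * (s1^2 + sn^2) + (cmod c1)^2 * (cos tau)^2) / (s1^2 * (cos tau)^2 + sn^2)"
  proof -
    have a: "T - 2*Bq*(1/E) + (E*N)*(1/E)^2 = (T*E - 2*Bq + N)/E" using En by (simp add: field_simps power2_eq_square)
    have TE: "T*E = S*P + S^2/c^2" unfolding T_def E_def using cn by (simp add: field_simps power2_eq_square)
    have Nexp: "N = S^2* s^2/c^2 - 2*(S*(s*m*k)) + c^2*m^2" unfolding N_def using cn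
      by (simp add: field_simps power2_eq_square power4_eq_xxxx)
    have X: "S^2/c^2 - S^2* s^2/c^2 = S^2"
    proof -
      have "S^2/c^2 - S^2* s^2/c^2 = S^2*(1-s^2)/c^2" by (simp add: diff_divide_distrib right_diff_distrib)
      also have "\<dots> = S^2" using cn sc by (simp add: s2)
      finally show ?thesis .
    qed
    have "T*E - 2*Bq + N = S*P + S^2 + m^2*c^2" using TE Nexp X unfolding Bq_def by (simp add: algebra_simps)
    hence "T - 2*Bq*(1/E) + (E*N)*(1/E)^2 = (S * (P + S) + m^2 * c^2) / E" unfolding a by (simp add: algebra_simps power2_eq_square)
    thus ?thesis unfolding mv0 Eeq S_def P_def m_def c_def .
  qed
  have d1Re: "d1 = Re d2" unfolding d1_def d2_def by simp
  have Bqd: "d1 * sn^2 * tan tau = Bq"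
    unfolding d1_def Bq_def tn S_def[symmetric] m_def[symmetric] k_def[symmetric] c_def[symmetric] s_def[symmetric]
    using cpos by (simp add: field_simps power2_eq_square)
  have Nd: "(cmod d2)^2 = N"
  proof -
    have "(cmod d2)^2 = (S* s/c)^2 - 2 * Re (of_real (S* s/c) * cnj (of_real (m*c) * cis (phic+phiz))) + (m*c)^2"
    proof -
      have d2e: "d2 = of_real (S * s/c) - of_real (m*c) * cis (phic+phiz)"
        unfolding d2_def tn S_def m_def c_def s_def by simp
      show ?thesis unfolding d2e cmod_diff_sq norm_mult norm_of_real by (simp add: power_mult_distrib power_divide)
    qed
    also have "\<dots> = (S* s/c)^2 - 2 * (S* s/c) * (m*c) * k + (m*c)^2"
      unfolding k_def by simp
    also have "\<dots> = N" unfolding N_def using cpos by (simp add: field_simps power2_eq_square power4_eq_xxxx)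
    finally show ?thesis .
  qed
  have img: "U ` {0..} = {0<..1/E}"
  proof
    show "U ` {0..} \<subseteq> {0<..1/E}"
    proof
      fix v assume "v \<in> U ` {0..}"
      then obtain lam where lam: "lam \<ge> 0" "v = U lam" by auto
      have le: "E \<le> (P + lam) * c^2 + S" unfolding E_def using lam cpos
        by (simp add: mult_right_mono)
      have "v > 0" using lam le Ep unfolding U_def by simp
      moreover have "v \<le> 1/E" unfolding lam U_def using le Ep by (intro frac_le) auto
      ultimately show "v \<in> {0<..1/E}" by simp
    qed
    show "{0<..1/E} \<subseteq> U ` {0..}"
    proof
      fix v assume v: "v \<in> {0<..1/E}"
      define lam where "lam = (1/v - S)/c^2 - P"
      have "1/v \<ge> E" using v Ep by (simp add: field_simps)
      hence "lam \<ge> 0" unfolding lam_def E_def using cpos by (simp add: field_simps)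
      moreover have "U lam = v" unfolding U_def lam_def using cpos v by (simp add: field_simps)
      ultimately show "v \<in> U ` {0..}" by force
    qed
  qed
  have rzf: "mRZF = (INF v\<in>{0<..1/E}. T - 2*Bq* v + (E*N)* v^2)"
  proof -
    have "mRZF = (INF lam\<in>{0..}. T - 2*Bq*U lam + (E*N)*(U lam)^2)"
      unfolding mRZF_def MSE_RZF_def using mse by (intro INF_cong) auto
    also have "\<dots> = (INF v\<in>U ` {0..}. T - 2*Bq* v + (E*N)* v^2)" by (simp add: image_image)
    finally show ?thesis unfolding img .
  qed
  have u0: "1/E > 0" using Ep by simp
  have Nge: "N \<ge> 0" using Nd[symmetric] by simp
  have CU: "(E*N) * (1/E) = N" using En by simp
  have part0: "d2 = 0 \<longrightarrow> (\<forall>lam\<ge>0. MSEfun (s0^2) (s1^2) (sn^2) c1 h0 h1 lam = mZF \<and> mZF = mMVDR)"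
  proof (intro impI allI)
    assume d: "d2 = 0"
    hence N0: "N = 0" using Nd by simp
    have B0: "Bq = 0" using Bqd d d1Re by simp
    fix lam :: real
    assume lam: "lam \<ge> 0"
    show "MSEfun (s0^2) (s1^2) (sn^2) c1 h0 h1 lam = mZF \<and> mZF = mMVDR"
      using mse[OF lam] mv0 N0 B0 zf by simp
  qed
  have part1: "d2 \<noteq> 0 \<longrightarrow>
           (let gam = d1 * sn^2 * tan tau / (cmod d2)^2 in
             (gam \<le> 0 \<longrightarrow> mRZF = mZF)
           \<and> (0 < gam \<and> gam < 1 \<longrightarrow>
                mRZF = mDR + (1 - (cmod (of_real d1 / d2))^2) * (sn^4 * (tan tau)^2) / (s1^2 * (cos tau)^2 + sn^2))
           \<and> (gam \<ge> 1 \<longrightarrow> mRZF = mMVDR))"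
  proof (intro impI)
    assume d: "d2 \<noteq> 0"
    hence Np: "N > 0" using Nd by (metis zero_less_norm_iff zero_less_power)
    have g: "d1 * sn^2 * tan tau / (cmod d2)^2 = Bq / N" unfolding Bqd Nd ..
    have c1': "mRZF = mZF" if "Bq / N \<le> 0"
    proof -
      have "Bq \<le> 0" using that Np by (simp add: divide_le_0_iff)
      thus ?thesis unfolding rzf zf using inf_a[OF u0, of "E*N" Bq T] Ep Nge by simp
    qed
    have c2': "mRZF = mDR + (1 - (cmod (of_real d1 / d2))^2) * (sn^4 * (tan tau)^2) / (s1^2 * (cos tau)^2 + sn^2)"
      if "0 < Bq / N" "Bq / N < 1"
    proof -
      have B: "0 < Bq" "Bq < (E*N) * (1/E)" using that Np CU by (auto simp: field_simps)
      have "mRZF = T - Bq^2/(E*N)" unfolding rzf using inf_c[OF u0 _ B, of T] Ep Np by simp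
      also have "\<dots> = mDR + (1 - (cmod (of_real d1 / d2))^2) * (sn^4 * (tan tau)^2) / (s1^2 * (cos tau)^2 + sn^2)"
      proof -
        have cm: "(cmod (of_real d1 / d2))^2 = d1^2 / N" using Nd by (simp add: norm_divide power_divide)
        have sn4: "sn^4 = S^2" unfolding S_def by simp
        have ic: "1/c^2 = 1 + (s/c)^2" using cn sc by (simp add: field_simps power_divide)
        have TE: "T*E = S*(P+S) + S^2*(s/c)^2" unfolding T_def E_def
        proof -
          have "S / c^2 * (P * c^2 + S) = S*P + S^2 * (1/c^2)" using cn by (simp add: field_simps power2_eq_square)
          also have "\<dots> = S*(P+S) + S^2*(s/c)^2" unfolding ic by (simp add: algebra_simps power2_eq_square)
          finally show "S / c^2 * (P * c^2 + S) = S*(P+S) + S^2*(s/c)^2" .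
        qed
        have hT: "T = S*(P+S)/E + S^2*(s/c)^2/E" using TE En by (simp add: field_simps)
        have Bq': "Bq = d1*S*(s/c)" using Bqd tn unfolding S_def by simp
        have "T - Bq^2/(E*N) = S*(P+S)/E + (1 - d1^2/N) * (S^2*(s/c)^2)/E"
          unfolding hT Bq' using En Np cn by (simp add: field_simps power2_eq_square)
        moreover have "mDR = S*(P+S)/E" unfolding dr Eeq S_def P_def ..
        ultimately show ?thesis unfolding cm sn4 Eeq tn by simp
      qed
      finally show ?thesis .
    qed
    have c3': "mRZF = mMVDR" if "Bq / N \<ge> 1"
    proof -
      have "Bq \<ge> (E*N) * (1/E)" using that Np CU by (simp add: field_simps)
      thus ?thesis unfolding rzf mv0 using inf_b[OF u0, of "E*N" Bq T] Ep Nge by simp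
    qed
    show "let gam = d1 * sn^2 * tan tau / (cmod d2)^2 in
             (gam \<le> 0 \<longrightarrow> mRZF = mZF)
           \<and> (0 < gam \<and> gam < 1 \<longrightarrow>
                mRZF = mDR + (1 - (cmod (of_real d1 / d2))^2) * (sn^4 * (tan tau)^2) / (s1^2 * (cos tau)^2 + sn^2))
           \<and> (gam \<ge> 1 \<longrightarrow> mRZF = mMVDR)"
      unfolding Let_def g using c1' c2' c3' by blast
  qed
  show ?thesis using mv zf T2 dr part0 part1 by simp
qed

end
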